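(* (Stability 2.) Let $1\le m\le n$, $x^{(m)}=(x_1,\dots,x_{m-1})$, $y^{(n)}=(y_1,\dots,y_{n-1})$. Then (for either type) \[{_{r+1}\Phi_r}\left[\begin{matrix}a_1,\dots,a_{r+1}\\ b_1,\dots,b_r\end{matrix};q,t;(x^{(m)},0),(y^{(n)},0)\right]={_{r+2}\Phi_{r+1}}\left[\begin{matrix}t^{n-1},a_1,\dots,a_{r+1}\\ t^n,b_1,\dots,b_r\end{matrix};q,t;x^{(m)},ty^{(n)}\right],\] where the left series has parameters $(m,n)$ and the right series has parameters $(m-1,n-1)$.
   Context: Notation. $(b;q)_N=(1-b)\cdots(1-bq^{N-1})$, $(b;q)_{-N}=1/(bq^{-N};q)_N$, $(b;q)_\infty=\prod_{k\ge0}(1-bq^k)$. For a partition $\lambda$: $l(\lambda)$, $|\lambda|$, $n(\lambda)=\sum_i(i-1)\lambda_i$, $c'_\lambda(q,t)=\prod_{s\in\lambda}(1-q^{a(s)+1}t^{l(s)})$ ($a(s)=\lambda_i-j$, $l(s)=\lambda'_j-i$), $(b;q,t)_\lambda=\prod_{i\ge1}(bt^{1-i};q)_{\lambda_i}$. $P_\lambda(x;q,t)$ Macdonald polynomial. For $0\le m\le n$: $F(u;x,y;t)=\sum_{I\subseteq\{1,\dots,m\}}(-u)^{|I|}t^{\binom{|I|}{2}}\prod_{i\in I,\,j\notin I}\frac{tx_i-x_j}{x_i-x_j}\prod_{i\in I}\prod_{j=1}^n\frac{1-x_iy_j}{1-tx_iy_j}$; $V_{\lambda\mu}(u,z;q,t)$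 is $F(u;x^{-1},y;t)$ at $x_i=zq^{\lambda_i}t^{m-i}$, $y_j=q^{\mu_j}t^{n-j}$; Type I: $V_{\lambda\mu}(q,t)=V_{\lambda\mu}(1,1;q,t)$; Type II: $V_{\lambda\mu}(q,t)=q^{-|\lambda|}V_{\lambda\mu}(t^{n-m+1},1;q,t)$; $\Omega_{\lambda\mu}(q,t)=V_{\lambda\mu}(q,t)(qt^{m-1};q,t)_\lambda\prod_{i=1}^m\prod_{j=1}^n\frac{(qt^{j-i+m-n-1};q)_{\lambda_i-\mu_j}}{(qt^{j-i+m-n};q)_{\lambda_i-\mu_j}}$. The $\mathfrak{sl}_3$ series with parameters $(m,n)$: ${_{r+1}\Phi_r}[a;b;q,t;x,y]=\prod_{i=1}^m\frac{(x_i;q)_\infty}{(x_it^{m-n-1};q)_\infty}\sum_{\lambda,\mu}t^{n(\lambda)+n(\mu)}\frac{P_\lambda(x;q,t)P_\mu(y;q,t)}{c'_\lambda(q,t)c'_\mu(q,t)}\frac{(a_1,\dots,a_{r+1};q,t)_\mu}{(b_1,\dots,b_r;q,t)_\mu}\Omega_{\lambda\mu}(q,t)$, over $l(\lambda)\le m$, $l(\mu)\le n$, $\lambda_i\ge\mu_{i-m+n}$. Convergence assumed. *)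

theory Defs
  imports "HOL-Analysis.Analysis"
begin

text \<open>A partition with at most m parts is represented as a weakly decreasing
  list of naturals of length exactly m (padded with zeros); entry i (0-based)
  is lambda_(i+1).\<close>

definition is_part :: "nat \<Rightarrow> nat list \<Rightarrow> bool" where
  "is_part m lam \<longleftrightarrow> length lam = m \<and> (\<forall>i. Suc i < m \<longrightarrow> lam ! Suc i \<le> lam ! i)"

definition psize :: "nat list \<Rightarrow> nat" where
  "psize lam = sum_list lam"

definition nfun :: "nat list \<Rightarrow> nat" where
  "nfun lam = (\<Sum>i<length lam. i * lam ! i)"

text \<open>Boxes (i,j), 1-based, of the Young diagram.\<close>
definition boxes :: "nat list \<Rightarrow> (nat \<times> nat) set" where
  "boxes lam = {(i, j). 1 \<le> i \<and> i \<le> length lam \<and> 1 \<le> j \<and> j \<le> lam ! (i - 1)}"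

definition conjp :: "nat list \<Rightarrow> nat \<Rightarrow> nat" where
  "conjp lam j = card {i. i < length lam \<and> j \<le> lam ! i}"

definition arm :: "nat list \<Rightarrow> nat \<times> nat \<Rightarrow> nat" where
  "arm lam s = lam ! (fst s - 1) - snd s"

definition leg :: "nat list \<Rightarrow> nat \<times> nat \<Rightarrow> nat" where
  "leg lam s = conjp lam (snd s) - fst s"

definition cprime :: "nat list \<Rightarrow> complex \<Rightarrow> complex \<Rightarrow> complex" where
  "cprime lam q t = (\<Prod>s\<in>boxes lam. 1 - q ^ (arm lam s + 1) * t ^ leg lam s)"

definition qpoch :: "complex \<Rightarrow> complex \<Rightarrow> nat \<Rightarrow> complex" where
  "qpoch b q N = (\<Prod>k<N. 1 - b * q ^ k)"

definition qpoch_int :: "complex \<Rightarrow> complex \<Rightarrow> int \<Rightarrow> complex" where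
  "qpoch_int b q N = (if 0 \<le> N then qpoch b q (nat N)
                      else 1 / qpoch (b * q powi N) q (nat (- N)))"

definition qpoch_inf :: "complex \<Rightarrow> complex \<Rightarrow> complex" where
  "qpoch_inf b q = lim (\<lambda>N. qpoch b q N)"

definition qpoch_part :: "complex \<Rightarrow> complex \<Rightarrow> complex \<Rightarrow> nat list \<Rightarrow> complex" where
  "qpoch_part b q t lam = (\<Prod>i<length lam. qpoch (b * t powi (- int i)) q (lam ! i))"

section \<open>Macdonald polynomials (tableau formula, Macdonald VI (7.13'))\<close>

definition bfun :: "nat list \<Rightarrow> complex \<Rightarrow> complex \<Rightarrow> nat \<times> nat \<Rightarrow> complex" where
  "bfun lam q t s = (if s \<in> boxes lam then
      (1 - q ^ arm lam s * t ^ (leg lam s + 1)) / (1 - q ^ (arm lam s + 1) * t ^ leg lam s)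
     else 1)"

definition hstrip :: "nat list \<Rightarrow> nat list \<Rightarrow> bool" where
  "hstrip lam mu \<longleftrightarrow> length lam = length mu \<and>
     (\<forall>i < length lam. mu ! i \<le> lam ! i \<and> (Suc i < length lam \<longrightarrow> lam ! Suc i \<le> mu ! i))"

text \<open>psi_{lam/mu} = prod over s in R - C of b_mu(s)/b_lam(s), where R (resp. C) is the
  union of rows (resp. columns) meeting lam/mu (Macdonald VI (6.24)).\<close>
definition psi :: "nat list \<Rightarrow> nat list \<Rightarrow> complex \<Rightarrow> complex \<Rightarrow> complex" where
  "psi lam mu q t = (\<Prod>s \<in> {(i, j). (i, j) \<in> boxes mu \<and> mu ! (i - 1) < lam ! (i - 1) \<and>
        \<not> (\<exists>k < length lam. mu ! k < j \<and> j \<le> lam ! k)}.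
      bfun mu q t s / bfun lam q t s)"

text \<open>Semistandard tableaux of shape lam with entries in {1..m}, as chains
  0 = lam^(0) \<subseteq> ... \<subseteq> lam^(m) = lam of horizontal strips.\<close>
definition tableaux :: "nat \<Rightarrow> nat list \<Rightarrow> nat list list set" where
  "tableaux m lam = {cs. length cs = Suc m \<and> cs ! 0 = replicate m 0 \<and> cs ! m = lam \<and>
      (\<forall>i\<le>m. length (cs ! i) = m) \<and> (\<forall>i<m. hstrip (cs ! Suc i) (cs ! i))}"

definition macP :: "nat list \<Rightarrow> complex \<Rightarrow> complex \<Rightarrow> complex list \<Rightarrow> complex" where
  "macP lam q t x = (\<Sum>cs \<in> tableaux (length x) lam.
      \<Prod>i < length x. psi (cs ! Suc i) (cs ! i) q t *
                      (x ! i) ^ (psize (cs ! Suc i) - psize (cs ! i)))"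

definition Ffun :: "complex \<Rightarrow> complex list \<Rightarrow> complex list \<Rightarrow> complex \<Rightarrow> complex" where
  "Ffun u x y t = (\<Sum>I \<in> Pow {0..<length x}.
      (- u) ^ card I * t ^ (card I choose 2) *
      (\<Prod>i\<in>I. \<Prod>j\<in>{0..<length x} - I. (t * x ! i - x ! j) / (x ! i - x ! j)) *
      (\<Prod>i\<in>I. \<Prod>j<length y. (1 - x ! i * y ! j) / (1 - t * x ! i * y ! j)))"

definition Vz :: "complex \<Rightarrow> complex \<Rightarrow> nat list \<Rightarrow> nat list \<Rightarrow> complex \<Rightarrow> complex \<Rightarrow> complex" where
  "Vz u z lam mu q t = Ffun u
      (map (\<lambda>i. 1 / (z * q ^ (lam ! i) * t ^ (length lam - 1 - i))) [0..<length lam])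
      (map (\<lambda>j. q ^ (mu ! j) * t ^ (length mu - 1 - j)) [0..<length mu]) t"

text \<open>Value at z = 1, as a rational function of z (i.e. the limit z \<rightarrow> 1).\<close>
definition V1 :: "complex \<Rightarrow> nat list \<Rightarrow> nat list \<Rightarrow> complex \<Rightarrow> complex \<Rightarrow> complex" where
  "V1 u lam mu q t = Lim (at 1) (\<lambda>z. Vz u z lam mu q t)"

datatype vtype = TypeI | TypeII

definition Vfun :: "vtype \<Rightarrow> nat list \<Rightarrow> nat list \<Rightarrow> complex \<Rightarrow> complex \<Rightarrow> complex" where
  "Vfun ty lam mu q t = (case ty of
      TypeI \<Rightarrow> V1 1 lam mu q t
    | TypeII \<Rightarrow> q powi (- int (psize lam)) *
                V1 (t ^ (length mu - length lam + 1)) lam mu q t)"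

definition Omega :: "vtype \<Rightarrow> nat list \<Rightarrow> nat list \<Rightarrow> complex \<Rightarrow> complex \<Rightarrow> complex" where
  "Omega ty lam mu q t = (let m = int (length lam); n = int (length mu) in
     Vfun ty lam mu q t * qpoch_part (q * t powi (m - 1)) q t lam *
     (\<Prod>i<length lam. \<Prod>j<length mu.
        qpoch_int (q * t powi (int j - int i + m - n - 1)) q (int (lam ! i) - int (mu ! j)) /
        qpoch_int (q * t powi (int j - int i + m - n)) q (int (lam ! i) - int (mu ! j))))"

definition Phi_index :: "nat \<Rightarrow> nat \<Rightarrow> (nat list \<times> nat list) set" where
  "Phi_index m n = {(lam, mu). is_part m lam \<and> is_part n mu \<and>
      (\<forall>i<m. mu ! (i + n - m) \<le> lam ! i)}"

definition Phi_term :: "vtype \<Rightarrow> complex list \<Rightarrow> complex list \<Rightarrow> complex \<Rightarrow> complex \<Rightarrow>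
    complex list \<Rightarrow> complex list \<Rightarrow> nat list \<times> nat list \<Rightarrow> complex" where
  "Phi_term ty a b q t x y p = (case p of (lam, mu) \<Rightarrow>
      t ^ (nfun lam + nfun mu) * macP lam q t x * macP mu q t y /
        (cprime lam q t * cprime mu q t) *
      (\<Prod>k<length a. qpoch_part (a ! k) q t mu) / (\<Prod>k<length b. qpoch_part (b ! k) q t mu) *
      Omega ty lam mu q t)"

definition Phi :: "vtype \<Rightarrow> complex list \<Rightarrow> complex list \<Rightarrow> complex \<Rightarrow> complex \<Rightarrow>
    complex list \<Rightarrow> complex list \<Rightarrow> complex" where
  "Phi ty a b q t x y = (let m = length x; n = length y in
      (\<Prod>i<m. qpoch_inf (x ! i) q / qpoch_inf (x ! i * t powi (int m - int n - 1)) q) *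
      infsum (Phi_term ty a b q t x y) (Phi_index m n))"

end

theory Submission
  imports Defs
begin


context
  fixes q t :: complex
  assumes q0: "q \<noteq> 0" and t0: "t \<noteq> 0"
    and generic: "\<forall>i j :: int. q powi i * t powi j = 1 \<longrightarrow> i = 0 \<and> j = 0"
begin

lemma gen_eq: "q^a * t^b = q^c * t^d \<longleftrightarrow> a = c \<and> b = d"
proof
  assume h: "q^a * t^b = q^c * t^d"
  have "q powi (int a - int c) * t powi (int b - int d) = 1"
    using h q0 t0 by (simp add: power_int_diff field_simps)
  hence "int a - int c = 0 \<and> int b - int d = 0" using generic by blast
  thus "a = c \<and> b = d" by simp
qed auto

lemma gen_eq1: "q^a * t^b = 1 \<longleftrightarrow> a = 0 \<and> b = 0"
  using gen_eq[of a b 0 0] by simp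

lemma t_ne1: "t \<noteq> 1" using gen_eq1[of 0 1] by auto

end

lemma powi_plus1: "(x::'a::field) \<noteq> 0 \<Longrightarrow> x powi (a + 1) = x powi a * x"
  using power_int_add[of x a 1] by simp

lemma qpoch_0[simp]: "qpoch b q 0 = 1" by (simp add: qpoch_def)

lemma qpoch_int_neg: "qpoch_int b q (- int N) = 1 / qpoch (b * q powi (- int N)) q N"
  by (cases "N = 0") (auto simp: qpoch_int_def)

lemma qpoch_int_nat: "qpoch_int b q (int N) = qpoch b q N"
  by (simp add: qpoch_int_def)

lemma qpoch_rev:
  assumes q0: "q \<noteq> 0" and c0: "c \<noteq> 0"
  shows "qpoch (q * c * q powi (- int N)) q N = (\<Prod>k<N. - c * q powi (- int k)) * qpoch (1/c) q N"
proof -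
  have "qpoch (q * c * q powi (- int N)) q N = (\<Prod>k<N. 1 - q * c * q powi (- int N) * q ^ k)"
    by (simp add: qpoch_def)
  also have "\<dots> = (\<Prod>k<N. 1 - c * q powi (- int k))"
  proof (rule prod.reindex_bij_witness[where i="\<lambda>k. N - 1 - k" and j="\<lambda>k. N - 1 - k"])
    fix k assume k: "k \<in> {..<N}"
    have e: "Suc (k + (N - Suc k)) = N" using k by simp
    have e2: "q * (q ^ k * q ^ (N - Suc k)) = q^N" by (metis e power_Suc power_add)
    have "q * q powi (- int N) * q ^ k = q powi (- int (N - 1 - k))"
      using q0 k e2 by (simp add: power_int_add power_int_diff power_int_minus field_simps)
    thus "1 - c * q powi (- int (N - 1 - k)) = 1 - q * c * q powi (- int N) * q ^ k"
      by (metis (no_types, lifting) mult.assoc mult.commute)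
  qed auto
  also have "\<dots> = (\<Prod>k<N. (- c * q powi (- int k)) * (1 - 1/c * q ^ k))"
  proof (rule prod.cong[OF refl])
    fix k
    show "1 - c * q powi (- int k) = (- c * q powi (- int k)) * (1 - 1/c * q ^ k)"
      using q0 c0 by (simp add: power_int_minus field_simps)
  qed
  also have "\<dots> = (\<Prod>k<N. - c * q powi (- int k)) * qpoch (1/c) q N"
    unfolding qpoch_def prod.distrib[symmetric] by simp
  finally show ?thesis .
qed


context
  fixes q t :: complex
  assumes q0: "q \<noteq> 0" and t0: "t \<noteq> 0"
begin

lemma row_factor:
  "qpoch_int (q * t powi (int j - int n - 1)) q (- int N) /
   qpoch_int (q * t powi (int j - int n)) q (- int N) =
   t^N * qpoch (t^n * t powi (- int j)) q N / qpoch (t^(n+1) * t powi (- int j)) q N"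
proof -
  define c1 where "c1 = t powi (int j - int n - 1)"
  define c2 where "c2 = t powi (int j - int n)"
  have c1: "c1 \<noteq> 0" and c2: "c2 \<noteq> 0" using t0 by (auto simp: c1_def c2_def)
  have "t powi (int j - int n) = t powi ((int j - int n - 1) + 1)" by simp
  also have "\<dots> = t powi (int j - int n - 1) * t" using t0 by (rule powi_plus1)
  finally have c21: "c2 = t * c1" unfolding c1_def c2_def by simp
  have ic2: "1 / c2 = t^n * t powi (- int j)" using t0 unfolding c2_def
    by (simp add: power_int_diff power_int_minus field_simps)
  have tp: "t powi (1 + int n) = t * t^n" by (metis of_nat_Suc power_int_of_nat power_Suc)
  have ic1: "1 / c1 = t^(n+1) * t powi (- int j)" using t0 unfolding c1_def
    by (simp add: power_int_diff power_int_minus field_simps tp)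
  define P where "P = (\<Prod>k<N. - c1 * q powi (- int k))"
  have P0: "P \<noteq> 0" using c1 q0 by (simp add: P_def)
  have P2: "(\<Prod>k<N. - c2 * q powi (- int k)) = t^N * P"
  proof -
    have "(\<Prod>k<N. - (t * c1) * q powi (- int k)) = (\<Prod>k<N. t * (- c1 * q powi (- int k)))"
      by (simp add: algebra_simps)
    also have "\<dots> = t^N * P" unfolding P_def prod.distrib by simp
    finally show ?thesis unfolding c21 .
  qed
  have "qpoch_int (q * c1) q (- int N) / qpoch_int (q * c2) q (- int N)
      = qpoch (q * c2 * q powi (- int N)) q N / qpoch (q * c1 * q powi (- int N)) q N"
    by (simp add: qpoch_int_neg)
  also have "\<dots> = (t^N * P * qpoch (1/c2) q N) / (P * qpoch (1/c1) q N)"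
    using qpoch_rev[OF q0 c1, of N] qpoch_rev[OF q0 c2, of N] P2 by (simp add: P_def)
  also have "\<dots> = t^N * qpoch (1/c2) q N / qpoch (1/c1) q N"
    using P0 by (simp add: field_simps)
  finally show ?thesis unfolding ic1 ic2 by (simp add: c1_def c2_def)
qed

end



lemma ev_at1: "\<forall>\<^sub>F z in at (1::complex). z \<noteq> 0 \<and> z \<noteq> 1"
proof -
  have "\<forall>\<^sub>F z in at (1::complex). z \<in> (- {0}) - {1}"
    by (rule eventually_at_in_open) auto
  thus ?thesis by (rule eventually_mono) auto
qed

lemma yprod_lim:
  fixes c :: "nat \<Rightarrow> complex" and t :: complex
  assumes t1: "t \<noteq> 1" and inj: "inj_on c {..<n}"
    and H: "\<forall>j<n. t * c j = 1 \<longrightarrow> 0 < j \<and> c (j - 1) = 1"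
  shows "\<exists>L. ((\<lambda>z. \<Prod>j<n. (1 - c j / z) / (1 - t * c j / z)) \<longlongrightarrow> L) (at 1) \<and>
             ((\<exists>j<n. c j = 1) \<and> (\<forall>j<n. t * c j \<noteq> 1) \<longrightarrow> L = 0)"
proof (cases "\<forall>j<n. t * c j \<noteq> 1")
  case True
  have "((\<lambda>z. \<Prod>j<n. (1 - c j / z) / (1 - t * c j / z)) \<longlongrightarrow>
          (\<Prod>j<n. (1 - c j / 1) / (1 - t * c j / 1))) (at 1)"
    using True by (intro tendsto_intros) auto
  moreover have "(\<exists>j<n. c j = 1) \<longrightarrow> (\<Prod>j<n. (1 - c j / 1) / (1 - t * c j / 1)) = 0"
    by auto
  ultimately show ?thesis using True by blast
next
  case False
  then obtain j0 where j0: "j0 < n" "t * c j0 = 1" by auto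
  with H have j0p: "0 < j0" and cj: "c (j0 - 1) = 1" by auto
  have t0: "t \<noteq> 0" using j0 by auto
  have others: "t * c j \<noteq> 1" if "j < n" "j \<noteq> j0" for j
  proof
    assume "t * c j = 1"
    hence "c j = c j0" using j0 t0 by (metis mult_left_cancel)
    with inj that j0 show False by (auto dest: inj_onD)
  qed
  define S where "S = {..<n} - {j0 - 1, j0}"
  define f where "f = (\<lambda>z j. (1 - c j / z) / (1 - t * c j / z))"
  define h where "h = (\<lambda>z. (\<Prod>j\<in>S. f z j) * ((1 - c j0 / z) / (1 - t / z)))"
  have "(h \<longlongrightarrow> (\<Prod>j\<in>S. f 1 j) * ((1 - c j0 / 1) / (1 - t / 1))) (at 1)"
    unfolding h_def f_def using others t1 by (intro tendsto_intros) (auto simp: S_def)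
  moreover have "\<forall>\<^sub>F z in at 1. h z = (\<Prod>j<n. f z j)"
    using ev_at1
  proof (rule eventually_mono)
    fix z :: complex assume z: "z \<noteq> 0 \<and> z \<noteq> 1"
    have fin: "finite {..<n}" by simp
    have "(\<Prod>j<n. f z j) = f z j0 * (\<Prod>j\<in>{..<n} - {j0}. f z j)"
      using j0 by (simp add: prod.remove)
    also have "(\<Prod>j\<in>{..<n} - {j0}. f z j) = f z (j0 - 1) * (\<Prod>j\<in>S. f z j)"
    proof -
      have "S = ({..<n} - {j0}) - {j0 - 1}" by (auto simp: S_def)
      moreover have "j0 - 1 \<in> {..<n} - {j0}" using j0 j0p by auto
      ultimately show ?thesis using prod.remove[of "{..<n} - {j0}" "j0 - 1" "f z"] by simp
    qed
    finally have e: "(\<Prod>j<n. f z j) = f z j0 * f z (j0 - 1) * (\<Prod>j\<in>S. f z j)"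
      by (simp add: mult.assoc)
    have z1: "1 - 1 / z \<noteq> 0" using z by (auto simp: field_simps)
    have "f z j0 * f z (j0 - 1) = (1 - c j0 / z) / (1 - t / z)"
    proof -
      have a: "f z j0 = (1 - c j0 / z) / (1 - 1 / z)" unfolding f_def using j0(2)
        by (metis times_divide_eq_right)
      have b: "f z (j0 - 1) = (1 - 1 / z) / (1 - t / z)" unfolding f_def cj by simp
      show ?thesis unfolding a b using z1 by simp
    qed
    thus "h z = (\<Prod>j<n. f z j)" unfolding e h_def by simp
  qed
  ultimately have "((\<lambda>z. \<Prod>j<n. f z j) \<longlongrightarrow> (\<Prod>j\<in>S. f 1 j) * ((1 - c j0 / 1) / (1 - t / 1))) (at 1)"
    by (rule Lim_transform_eventually)
  thus ?thesis using False unfolding f_def by blast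
qed


definition Xf :: "complex \<Rightarrow> complex \<Rightarrow> nat list \<Rightarrow> complex \<Rightarrow> nat \<Rightarrow> complex" where
  "Xf q t lam z i = 1 / (z * q ^ (lam ! i) * t ^ (length lam - 1 - i))"
definition Yf :: "complex \<Rightarrow> complex \<Rightarrow> nat list \<Rightarrow> nat \<Rightarrow> complex" where
  "Yf q t mu j = q ^ (mu ! j) * t ^ (length mu - 1 - j)"
definition Ypf :: "complex \<Rightarrow> complex \<Rightarrow> nat list \<Rightarrow> nat list \<Rightarrow> complex \<Rightarrow> nat \<Rightarrow> complex" where
  "Ypf q t lam mu z i = (\<Prod>j<length mu. (1 - Xf q t lam z i * Yf q t mu j) /
      (1 - t * Xf q t lam z i * Yf q t mu j))"
definition XFf :: "complex \<Rightarrow> complex \<Rightarrow> nat list \<Rightarrow> complex \<Rightarrow> nat set \<Rightarrow> complex" where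
  "XFf q t lam z I = (\<Prod>i\<in>I. \<Prod>j\<in>{0..<length lam} - I.
      (t * Xf q t lam z i - Xf q t lam z j) / (Xf q t lam z i - Xf q t lam z j))"
definition TT :: "complex \<Rightarrow> complex \<Rightarrow> complex \<Rightarrow> nat list \<Rightarrow> nat list \<Rightarrow> complex \<Rightarrow> nat set \<Rightarrow> complex" where
  "TT u q t lam mu z I = (- u) ^ card I * t ^ (card I choose 2) * XFf q t lam z I *
      (\<Prod>i\<in>I. Ypf q t lam mu z i)"

lemma Vz_eq: "Vz u z lam mu q t = (\<Sum>I\<in>Pow {0..<length lam}. TT u q t lam mu z I)"
  unfolding Vz_def Ffun_def TT_def XFf_def Ypf_def
  apply (rule sum.cong)
   apply simp
  apply (intro arg_cong2[where f="(*)"] refl prod.cong)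
  apply (auto simp: Xf_def Yf_def)
  done


definition goodp :: "nat list \<Rightarrow> nat list \<Rightarrow> bool" where
  "goodp lam mu \<longleftrightarrow> is_part (length lam) lam \<and> is_part (length mu) mu \<and>
     length lam \<le> length mu \<and> (\<forall>i<length lam. mu ! (i + length mu - length lam) \<le> lam ! i)"

lemma part_mono: "is_part m l \<Longrightarrow> i \<le> j \<Longrightarrow> j < m \<Longrightarrow> l ! j \<le> l ! i"
proof (induction j)
  case 0 thus ?case by simp
next
  case (Suc j)
  show ?case
  proof (cases "i = Suc j")
    case False
    hence "l ! j \<le> l ! i" using Suc by auto
    moreover have "l ! Suc j \<le> l ! j" using Suc.prems unfolding is_part_def by auto
    ultimately show ?thesis by simp
  qed simp
qed

context
  fixes q t :: complex
  assumes q0: "q \<noteq> 0" and t0: "t \<noteq> 0"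
    and generic: "\<forall>i j :: int. q powi i * t powi j = 1 \<longrightarrow> i = 0 \<and> j = 0"
begin

lemmas geq = gen_eq[OF q0 t0 generic]
lemmas geq1 = gen_eq1[OF q0 t0 generic]
lemmas tne1 = t_ne1[OF q0 t0 generic]

lemma Yp_lim:
  assumes g: "goodp lam mu" and i: "i < length lam"
  shows "\<exists>L. ((\<lambda>z. Ypf q t lam mu z i) \<longlongrightarrow> L) (at 1) \<and>
             (lam ! i = 0 \<and> Suc i = length lam \<longrightarrow> L = 0)"
proof -
  define m where "m = length lam"
  define n where "n = length mu"
  have mn: "m \<le> n" and pm: "is_part n mu" and il: "\<forall>i<m. mu ! (i + n - m) \<le> lam ! i"
    using g by (auto simp: goodp_def m_def n_def)
  define Q where "Q = q ^ (lam ! i) * t ^ (m - 1 - i)"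
  have Q0: "Q \<noteq> 0" using q0 t0 by (simp add: Q_def)
  define c where "c = (\<lambda>j. Yf q t mu j / Q)"
  have eq: "Ypf q t lam mu z i = (\<Prod>j<n. (1 - c j / z) / (1 - t * c j / z))" for z
  proof -
    have "Xf q t lam z i * Yf q t mu j = c j / z" for j
      unfolding Xf_def c_def Q_def m_def by (simp add: divide_inverse mult_ac)
    thus ?thesis unfolding Ypf_def n_def by (simp add: mult.assoc)
  qed
  have inj: "inj_on c {..<n}"
  proof (rule inj_onI)
    fix j k assume j: "j \<in> {..<n}" and k: "k \<in> {..<n}" and e: "c j = c k"
    hence "Yf q t mu j = Yf q t mu k" using Q0 by (simp add: c_def)
    hence "n - 1 - j = n - 1 - k" unfolding Yf_def n_def using geq by blast
    thus "j = k" using j k by auto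
  qed
  have H: "\<forall>j<n. t * c j = 1 \<longrightarrow> 0 < j \<and> c (j - 1) = 1"
  proof (intro allI impI)
    fix j assume j: "j < n" and e: "t * c j = 1"
    hence "t * Yf q t mu j = Q" using Q0 by (simp add: c_def field_simps)
    hence "q ^ (mu ! j) * t ^ Suc (n - 1 - j) = q ^ (lam ! i) * t ^ (m - 1 - i)"
      by (simp add: Yf_def Q_def n_def mult_ac)
    hence e1: "mu ! j = lam ! i" and e2: "Suc (n - 1 - j) = m - 1 - i" using geq by blast+
    have j0: "0 < j" using e2 mn i j m_def by linarith
    have jj: "j - 1 = i + n - m" using e2 mn i j m_def by linarith
    have "mu ! (j - 1) \<le> lam ! i" using il i jj m_def by auto
    moreover have "mu ! j \<le> mu ! (j - 1)" using part_mono[OF pm, of "j - 1" j] j by simp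
    ultimately have "mu ! (j - 1) = lam ! i" using e1 by simp
    moreover have "n - 1 - (j - 1) = m - 1 - i" using e2 j0 j by linarith
    ultimately have "Yf q t mu (j - 1) = Q" by (simp add: Yf_def Q_def n_def)
    thus "0 < j \<and> c (j - 1) = 1" using j0 Q0 by (simp add: c_def)
  qed
  obtain L where L: "((\<lambda>z. \<Prod>j<n. (1 - c j / z) / (1 - t * c j / z)) \<longlongrightarrow> L) (at 1)"
    and LZ: "(\<exists>j<n. c j = 1) \<and> (\<forall>j<n. t * c j \<noteq> 1) \<longrightarrow> L = 0"
    using yprod_lim[OF tne1 inj H] by blast
  have "lam ! i = 0 \<and> Suc i = length lam \<longrightarrow> L = 0"
  proof
    assume a: "lam ! i = 0 \<and> Suc i = length lam"
    hence Q1: "Q = 1" by (simp add: Q_def m_def)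
    have n1: "n - 1 < n" "n - 1 = i + n - m" using a mn m_def by auto
    have "mu ! (n - 1) \<le> lam ! i" using il i n1 m_def by auto
    hence "c (n - 1) = 1" using a Q1 by (simp add: c_def Yf_def n_def)
    moreover have "\<forall>j<n. t * c j \<noteq> 1"
    proof (intro allI impI notI)
      fix j assume "j < n" "t * c j = 1"
      hence "q ^ (mu ! j) * t ^ Suc (n - 1 - j) = 1"
        using Q1 by (simp add: c_def Yf_def n_def mult_ac)
      thus False using geq1 by blast
    qed
    ultimately show "L = 0" using LZ n1 by blast
  qed
  thus ?thesis using L unfolding eq by blast
qed


definition LYf where "LYf lam mu i = Lim (at 1) (\<lambda>z. Ypf q t lam mu z i)"
definition LTf where "LTf u lam mu I = Lim (at 1) (\<lambda>z. TT u q t lam mu z I)"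

lemma LY_tendsto:
  assumes "goodp lam mu" "i < length lam"
  shows "((\<lambda>z. Ypf q t lam mu z i) \<longlongrightarrow> LYf lam mu i) (at 1)"
proof -
  obtain L where L: "((\<lambda>z. Ypf q t lam mu z i) \<longlongrightarrow> L) (at 1)" using Yp_lim[OF assms] by blast
  hence "LYf lam mu i = L" unfolding LYf_def by (intro tendsto_Lim) (auto simp: trivial_limit_at)
  thus ?thesis using L by simp
qed

lemma LY_zero:
  assumes "goodp lam mu" "i < length lam" "lam ! i = 0" "Suc i = length lam"
  shows "LYf lam mu i = 0"
proof -
  obtain L where L: "((\<lambda>z. Ypf q t lam mu z i) \<longlongrightarrow> L) (at 1)" and "L = 0"
    using Yp_lim[OF assms(1,2)] assms(3,4) by blast
  hence "LYf lam mu i = L" unfolding LYf_def by (intro tendsto_Lim) (auto simp: trivial_limit_at)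
  thus ?thesis using \<open>L = 0\<close> by simp
qed

lemma Xf_tendsto: "((\<lambda>z. Xf q t lam z i) \<longlongrightarrow> Xf q t lam 1 i) (at 1)"
  unfolding Xf_def using q0 t0 by (intro tendsto_intros) auto

lemma Xf_inj1:
  assumes "i < length lam" "j < length lam" "Xf q t lam 1 i = Xf q t lam 1 j"
  shows "i = j"
proof -
  have "q ^ (lam ! i) * t ^ (length lam - 1 - i) = q ^ (lam ! j) * t ^ (length lam - 1 - j)"
    using assms(3) q0 t0 by (simp add: Xf_def)
  hence "length lam - 1 - i = length lam - 1 - j" using geq by blast
  thus ?thesis using assms(1,2) by auto
qed

lemma XF_tendsto:
  assumes I: "I \<subseteq> {0..<length lam}"
  shows "((\<lambda>z. XFf q t lam z I) \<longlongrightarrow> XFf q t lam 1 I) (at 1)"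
  unfolding XFf_def
proof (intro tendsto_prod tendsto_divide tendsto_diff tendsto_mult tendsto_const Xf_tendsto)
  fix i j assume "i \<in> I" "j \<in> {0..<length lam} - I"
  thus "Xf q t lam 1 i - Xf q t lam 1 j \<noteq> 0" using I Xf_inj1[of i lam j] by auto
qed

lemma TT_tendsto:
  assumes g: "goodp lam mu" and I: "I \<subseteq> {0..<length lam}"
  shows "((\<lambda>z. TT u q t lam mu z I) \<longlongrightarrow>
     (- u) ^ card I * t ^ (card I choose 2) * XFf q t lam 1 I * (\<Prod>i\<in>I. LYf lam mu i)) (at 1)"
  unfolding TT_def
  using I by (intro tendsto_mult tendsto_const XF_tendsto tendsto_prod LY_tendsto[OF g]) auto

lemma LT_eq:
  assumes g: "goodp lam mu" and I: "I \<subseteq> {0..<length lam}"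
  shows "LTf u lam mu I = (- u) ^ card I * t ^ (card I choose 2) * XFf q t lam 1 I * (\<Prod>i\<in>I. LYf lam mu i)"
  unfolding LTf_def by (intro tendsto_Lim TT_tendsto[OF assms]) (auto simp: trivial_limit_at)

lemma LT_tendsto:
  assumes g: "goodp lam mu" and I: "I \<subseteq> {0..<length lam}"
  shows "((\<lambda>z. TT u q t lam mu z I) \<longlongrightarrow> LTf u lam mu I) (at 1)"
  using TT_tendsto[OF assms] LT_eq[OF assms] by simp

lemma LT_zero:
  assumes g: "goodp lam mu" and I: "I \<subseteq> {0..<length lam}" and i: "i \<in> I"
    and "lam ! i = 0" "Suc i = length lam"
  shows "LTf u lam mu I = 0"
proof -
  have "LYf lam mu i = 0" using LY_zero[OF g _ assms(4,5)] i I by auto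
  moreover have "finite I" using I finite_subset by blast
  ultimately have "(\<Prod>i\<in>I. LYf lam mu i) = 0" using i prod_zero_iff by blast
  thus ?thesis using LT_eq[OF g I] by simp
qed

lemma V1_eq:
  assumes g: "goodp lam mu"
  shows "V1 u lam mu q t = (\<Sum>I\<in>Pow {0..<length lam}. LTf u lam mu I)"
proof -
  have "((\<lambda>z. Vz u z lam mu q t) \<longlongrightarrow> (\<Sum>I\<in>Pow {0..<length lam}. LTf u lam mu I)) (at 1)"
    unfolding Vz_eq by (intro tendsto_sum LT_tendsto[OF g]) auto
  thus ?thesis unfolding V1_def by (intro tendsto_Lim) (auto simp: trivial_limit_at)
qed

end



lemma good_app: "goodp lam mu \<Longrightarrow> goodp (lam @ [0]) (mu @ [0])"
  unfolding goodp_def is_part_def by (auto simp: nth_append)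

lemma frac_scale: "(t::complex) \<noteq> 0 \<Longrightarrow> (t * (a / t) - b / t) / (a / t - b / t) = (t * a - b) / (a - b)"
  by (cases "a = b") (auto simp: field_simps)

context
  fixes q t :: complex
  assumes q0: "q \<noteq> 0" and t0: "t \<noteq> 0"
    and generic: "\<forall>i j :: int. q powi i * t powi j = 1 \<longrightarrow> i = 0 \<and> j = 0"
begin

lemmas geq' = gen_eq[OF q0 t0 generic]

lemma Xf_app: "i < length lam \<Longrightarrow> Xf q t (lam @ [0]) z i = Xf q t lam z i / t"
proof -
  assume i: "i < length lam"
  have "length lam - i = Suc (length lam - 1 - i)" using i by auto
  thus ?thesis using i by (simp add: Xf_def nth_append field_simps)
qed

lemma Xf_app_last: "Xf q t (lam @ [0]) z (length lam) = 1 / z"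
  by (simp add: Xf_def)

lemma Yf_app: "j < length mu \<Longrightarrow> Yf q t (mu @ [0]) j = t * Yf q t mu j"
proof -
  assume j: "j < length mu"
  have "length mu - j = Suc (length mu - 1 - j)" using j by auto
  thus ?thesis using j by (simp add: Yf_def nth_append field_simps)
qed

lemma Yf_app_last: "Yf q t (mu @ [0]) (length mu) = 1"
  by (simp add: Yf_def)

definition e1 where "e1 lam z i = (t * Xf q t (lam @ [0]) z i - Xf q t (lam @ [0]) z (length lam)) /
   (Xf q t (lam @ [0]) z i - Xf q t (lam @ [0]) z (length lam))"
definition e2 where "e2 lam z i = (1 - Xf q t (lam @ [0]) z i) / (1 - t * Xf q t (lam @ [0]) z i)"

lemma Ypf_app: "i < length lam \<Longrightarrow>
   Ypf q t (lam @ [0]) (mu @ [0]) z i = Ypf q t lam mu z i * e2 lam z i"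
proof -
  assume i: "i < length lam"
  have "Xf q t (lam @ [0]) z i * Yf q t (mu @ [0]) j = Xf q t lam z i * Yf q t mu j"
    if "j < length mu" for j
    using that i t0 by (simp add: Xf_app Yf_app)
  thus ?thesis unfolding Ypf_def e2_def using i
    by (simp add: Yf_app_last mult.assoc)
qed

lemma XFf_app:
  assumes I: "I \<subseteq> {0..<length lam}"
  shows "XFf q t (lam @ [0]) z I = XFf q t lam z I * (\<Prod>i\<in>I. e1 lam z i)"
proof -
  have fI: "finite I" using I finite_subset by blast
  have S: "{0..<length (lam @ [0])} - I = insert (length lam) ({0..<length lam} - I)"
    using I by auto
  have "XFf q t (lam @ [0]) z I = (\<Prod>i\<in>I. e1 lam z i * (\<Prod>j\<in>{0..<length lam} - I.
      (t * Xf q t (lam @ [0]) z i - Xf q t (lam @ [0]) z j) / (Xf q t (lam @ [0]) z i - Xf q t (lam @ [0]) z j)))"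
    unfolding XFf_def S e1_def by (intro prod.cong refl) (simp add: prod.insert)
  also have "\<dots> = (\<Prod>i\<in>I. e1 lam z i * (\<Prod>j\<in>{0..<length lam} - I.
      (t * Xf q t lam z i - Xf q t lam z j) / (Xf q t lam z i - Xf q t lam z j)))"
  proof (intro prod.cong refl arg_cong2[where f="(*)"])
    fix i j assume "i \<in> I" "j \<in> {0..<length lam} - I"
    hence "i < length lam" "j < length lam" using I by auto
    hence a: "Xf q t (lam @ [0]) z i = Xf q t lam z i / t" and b: "Xf q t (lam @ [0]) z j = Xf q t lam z j / t"
      by (simp_all add: Xf_app)
    show "(t * Xf q t (lam @ [0]) z i - Xf q t (lam @ [0]) z j) / (Xf q t (lam @ [0]) z i - Xf q t (lam @ [0]) z j) =
          (t * Xf q t lam z i - Xf q t lam z j) / (Xf q t lam z i - Xf q t lam z j)"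
      unfolding a b by (rule frac_scale[OF t0])
  qed
  also have "\<dots> = XFf q t lam z I * (\<Prod>i\<in>I. e1 lam z i)"
    unfolding XFf_def prod.distrib by simp
  finally show ?thesis .
qed

lemma TT_app:
  assumes I: "I \<subseteq> {0..<length lam}"
  shows "TT u q t (lam @ [0]) (mu @ [0]) z I = TT u q t lam mu z I * (\<Prod>i\<in>I. e1 lam z i * e2 lam z i)"
proof -
  have "(\<Prod>i\<in>I. Ypf q t (lam @ [0]) (mu @ [0]) z i) = (\<Prod>i\<in>I. Ypf q t lam mu z i) * (\<Prod>i\<in>I. e2 lam z i)"
    using I by (simp add: Ypf_app prod.distrib[symmetric] subset_iff)
  thus ?thesis unfolding TT_def XFf_app[OF I] prod.distrib by (simp add: mult_ac)
qed


lemmas LT_tendsto' = LT_tendsto[OF q0 t0 generic]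
lemmas LT_zero' = LT_zero[OF q0 t0 generic]
lemmas V1_eq' = V1_eq[OF q0 t0 generic]
lemmas Xf_tendsto' = Xf_tendsto[OF q0 t0 generic]

lemma LT_stab:
  assumes g: "goodp lam mu" and I: "I \<subseteq> {0..<length lam}"
  shows "LTf q t u (lam @ [0]) (mu @ [0]) I = LTf q t u lam mu I"
proof -
  have g': "goodp (lam @ [0]) (mu @ [0])" using good_app[OF g] .
  have I': "I \<subseteq> {0..<length (lam @ [0])}" using I by auto
  have fI: "finite I" using I finite_subset by blast
  have L': "((\<lambda>z. TT u q t (lam @ [0]) (mu @ [0]) z I) \<longlongrightarrow> LTf q t u (lam @ [0]) (mu @ [0]) I) (at 1)"
    by (rule LT_tendsto'[OF g' I'])
  have L: "((\<lambda>z. TT u q t lam mu z I) \<longlongrightarrow> LTf q t u lam mu I) (at 1)"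
    by (rule LT_tendsto'[OF g I])
  show ?thesis
  proof (cases "\<exists>i\<in>I. lam ! i = 0 \<and> Suc i = length lam")
    case True
    then obtain i where i: "i \<in> I" "lam ! i = 0" "Suc i = length lam" by blast
    have z0: "LTf q t u lam mu I = 0" by (rule LT_zero'[OF g I i])
    have "\<forall>\<^sub>F z in at 1. 0 = TT u q t (lam @ [0]) (mu @ [0]) z I"
      using ev_at1
    proof (rule eventually_mono)
      fix z :: complex assume z: "z \<noteq> 0 \<and> z \<noteq> 1"
      have li: "length lam - i = 1" using i by simp
      have "e1 lam z i = 0"
        using i z t0 unfolding e1_def by (simp add: Xf_def nth_append li)
      hence "(\<Prod>i\<in>I. e1 lam z i * e2 lam z i) = 0" using i(1) fI by (metis mult_zero_left prod_zero_iff)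
      thus "0 = TT u q t (lam @ [0]) (mu @ [0]) z I" unfolding TT_app[OF I] by simp
    qed
    hence "((\<lambda>z. TT u q t (lam @ [0]) (mu @ [0]) z I) \<longlongrightarrow> 0) (at 1)"
      by (rule Lim_transform_eventually[OF tendsto_const])
    with L' have "LTf q t u (lam @ [0]) (mu @ [0]) I = 0"
      using tendsto_unique[OF trivial_limit_at] by blast
    thus ?thesis using z0 by simp
  next
    case False
    have lim1: "((\<lambda>z. e1 lam z i * e2 lam z i) \<longlongrightarrow> 1) (at 1)" if i: "i \<in> I" for i
    proof -
      have il: "i < length lam" using i I by auto
      define w where "w = Xf q t (lam @ [0]) 1 i"
      have w: "w = 1 / (q ^ (lam ! i) * t ^ (length lam - i))" unfolding w_def Xf_def using il by (simp add: nth_append)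
      have Q0: "q ^ (lam ! i) * t ^ (length lam - i) \<noteq> 0" using q0 t0 by simp
      have w1: "w \<noteq> 1"
      proof
        assume "w = 1"
        hence "q ^ (lam ! i) * t ^ (length lam - i) = q ^ 0 * t ^ 0" using w Q0 by (simp add: field_simps)
        hence "length lam - i = 0" using geq' by blast
        thus False using il by simp
      qed
      have tw1: "1 - t * w \<noteq> 0"
      proof
        assume "1 - t * w = 0"
        hence "q ^ (lam ! i) * t ^ (length lam - i) = q ^ 0 * t ^ 1" using w Q0 by (simp add: field_simps)
        hence "lam ! i = 0 \<and> length lam - i = 1" using geq' by blast
        thus False using False i il by auto
      qed
      have xm: "Xf q t (lam @ [0]) 1 (length lam) = 1" by (simp add: Xf_def)
      have "((\<lambda>z. e1 lam z i * e2 lam z i) \<longlongrightarrow> ((t * w - 1) / (w - 1)) * ((1 - w) / (1 - t * w))) (at 1)"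
        unfolding e1_def e2_def
        using w1 tw1 Xf_tendsto'[of "lam @ [0]" i] Xf_tendsto'[of "lam @ [0]" "length lam"]
        by (intro tendsto_intros) (auto simp: w_def xm)
      moreover have "((t * w - 1) / (w - 1)) * ((1 - w) / (1 - t * w)) = 1"
      proof -
        have "(t * w - 1) * (1 - w) = (w - 1) * (1 - t * w)" by (simp add: algebra_simps)
        moreover have "(w - 1) * (1 - t * w) \<noteq> 0" using w1 tw1 by simp
        ultimately show ?thesis by (simp add: times_divide_times_eq)
      qed
      ultimately show ?thesis by simp
    qed
    have "((\<lambda>z. TT u q t lam mu z I * (\<Prod>i\<in>I. e1 lam z i * e2 lam z i)) \<longlongrightarrow> LTf q t u lam mu I * 1) (at 1)"
    proof (rule tendsto_mult[OF L])
      have "((\<lambda>z. \<Prod>i\<in>I. e1 lam z i * e2 lam z i) \<longlongrightarrow> (\<Prod>i\<in>I. (1::complex))) (at 1)"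
        by (rule tendsto_prod) (rule lim1)
      thus "((\<lambda>z. \<Prod>i\<in>I. e1 lam z i * e2 lam z i) \<longlongrightarrow> 1) (at 1)" by simp
    qed
    hence "((\<lambda>z. TT u q t (lam @ [0]) (mu @ [0]) z I) \<longlongrightarrow> LTf q t u lam mu I) (at 1)"
      unfolding TT_app[OF I] by simp
    with L' show ?thesis using tendsto_unique[OF trivial_limit_at] by blast
  qed
qed

lemma V1_stab:
  assumes g: "goodp lam mu"
  shows "V1 u (lam @ [0]) (mu @ [0]) q t = V1 u lam mu q t"
proof -
  have g': "goodp (lam @ [0]) (mu @ [0])" using good_app[OF g] .
  have "V1 u (lam @ [0]) (mu @ [0]) q t = (\<Sum>I\<in>Pow {0..<Suc (length lam)}. LTf q t u (lam @ [0]) (mu @ [0]) I)"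
    using V1_eq'[OF g'] by simp
  also have "\<dots> = (\<Sum>I\<in>Pow {0..<length lam}. LTf q t u (lam @ [0]) (mu @ [0]) I)"
  proof (rule sum.mono_neutral_right)
    show "\<forall>I\<in>Pow {0..<Suc (length lam)} - Pow {0..<length lam}. LTf q t u (lam @ [0]) (mu @ [0]) I = 0"
    proof
      fix I assume "I \<in> Pow {0..<Suc (length lam)} - Pow {0..<length lam}"
      hence I: "I \<subseteq> {0..<length (lam @ [0])}" and m: "length lam \<in> I" by (auto simp: less_Suc_eq)
      show "LTf q t u (lam @ [0]) (mu @ [0]) I = 0" by (rule LT_zero'[OF g' I m]) auto
    qed
  qed auto
  also have "\<dots> = (\<Sum>I\<in>Pow {0..<length lam}. LTf q t u lam mu I)"
    using LT_stab[OF g] by auto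
  also have "\<dots> = V1 u lam mu q t" using V1_eq'[OF g] by simp
  finally show ?thesis .
qed

end



lemma prod_Suc2: "(\<Prod>i<Suc m. \<Prod>j<Suc n. f i j) =
   (\<Prod>i<m. (\<Prod>j<n. f i j) * f i n) * ((\<Prod>j<n. f m j) * f m n)"
  by (simp add: prod.lessThan_Suc)

lemma psize_sum: "psize mu = (\<Sum>j<length mu. mu ! j)"
  by (simp add: psize_def sum_list_sum_nth atLeast0LessThan)

context
  fixes q t :: complex
  assumes q0: "q \<noteq> 0" and t0: "t \<noteq> 0"
    and generic: "\<forall>i j :: int. q powi i * t powi j = 1 \<longrightarrow> i = 0 \<and> j = 0"
begin

lemmas geq'' = gen_eq[OF q0 t0 generic]
lemmas geq1'' = gen_eq1[OF q0 t0 generic]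

lemma tpow_add: "t powi a * t powi b = t powi (a + b)"
  using t0 by (simp add: power_int_add)

lemma tpow_nat: "t ^ a * t powi b = t powi (int a + b)"
  using t0 by (simp add: power_int_add)

lemma Vfun_stab: "goodp lam mu \<Longrightarrow> Vfun ty (lam @ [0]) (mu @ [0]) q t = Vfun ty lam mu q t"
proof -
  assume g: "goodp lam mu"
  have V: "\<And>u. V1 u (lam @ [0]) (mu @ [0]) q t = V1 u lam mu q t" by (rule V1_stab[OF q0 t0 generic g])
  show ?thesis by (cases ty) (simp_all add: Vfun_def V psize_def)
qed

lemma D_nz: "m > i \<Longrightarrow> qpoch (q * t powi (int m - int i)) q N \<noteq> 0"
proof -
  assume mi: "m > i"
  have e: "int m - int i = int (m - i)" using mi by simp
  have tp: "t powi (int m - int i) = t ^ (m - i)" by (simp only: e power_int_of_nat)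
  have "q * t powi (int m - int i) * q ^ k \<noteq> 1" for k
  proof -
    have "q * t powi (int m - int i) * q ^ k = q ^ Suc k * t ^ (m - i)"
      unfolding tp by (simp add: mult_ac)
    moreover have "q ^ Suc k * t ^ (m - i) \<noteq> 1" using geq1''[of "Suc k" "m - i"] mi by simp
    ultimately show ?thesis by metis
  qed
  thus ?thesis unfolding qpoch_def by (simp add: prod_zero_iff)
qed

lemma Omega_stab:
  assumes g: "goodp lam mu"
  shows "Omega ty (lam @ [0]) (mu @ [0]) q t =
    t ^ psize mu * qpoch_part (t ^ length mu) q t mu / qpoch_part (t ^ (length mu + 1)) q t mu *
    Omega ty lam mu q t"
proof -
  define m where "m = length lam"
  define n where "n = length mu"
  define V where "V = Vfun ty lam mu q t"
  define G where "G = (\<lambda>i j. qpoch_int (q * t powi (int j - int i + int m - int n - 1)) q (int (lam!i) - int (mu!j)) /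
      qpoch_int (q * t powi (int j - int i + int m - int n)) q (int (lam!i) - int (mu!j)))"
  define G' where "G' = (\<lambda>i j. qpoch_int (q * t powi (int j - int i + int (Suc m) - int (Suc n) - 1)) q
         (int ((lam @ [0]) ! i) - int ((mu @ [0]) ! j)) /
      qpoch_int (q * t powi (int j - int i + int (Suc m) - int (Suc n))) q (int ((lam @ [0]) ! i) - int ((mu @ [0]) ! j)))"
  define N where "N = (\<lambda>i. qpoch (q * t powi (int m - 1 - int i)) q (lam ! i))"
  define D where "D = (\<lambda>i. qpoch (q * t powi (int m - int i)) q (lam ! i))"
  define A where "A = (\<lambda>j. qpoch (t ^ n * t powi (- int j)) q (mu ! j))"
  define B where "B = (\<lambda>j. qpoch (t ^ (n + 1) * t powi (- int j)) q (mu ! j))"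
  have O1: "Omega ty lam mu q t = V * (\<Prod>i<m. N i) * (\<Prod>i<m. \<Prod>j<n. G i j)"
    unfolding Omega_def Let_def V_def G_def m_def n_def qpoch_part_def N_def
    by (simp add: mult.assoc tpow_add)
  have O2: "Omega ty (lam @ [0]) (mu @ [0]) q t = V * (\<Prod>i<m. D i) * (\<Prod>i<Suc m. \<Prod>j<Suc n. G' i j)"
  proof -
    have "qpoch_part (q * t powi (int (length (lam @ [0])) - 1)) q t (lam @ [0]) = (\<Prod>i<m. D i)"
      unfolding qpoch_part_def D_def m_def
      by (simp add: prod.lessThan_Suc nth_append mult.assoc tpow_nat)
    thus ?thesis unfolding Omega_def Let_def V_def G'_def m_def n_def
      using Vfun_stab[OF g] by simp
  qed
  have GG: "G' i j = G i j" if "i < m" "j < n" for i j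
    using that unfolding G_def G'_def by (simp add: nth_append m_def n_def algebra_simps)
  have Gc: "G' i n = N i / D i" if "i < m" for i
  proof -
    have "G' i n = qpoch_int (q * t powi (int m - 1 - int i)) q (int (lam ! i)) /
        qpoch_int (q * t powi (int m - int i)) q (int (lam ! i))"
      using that unfolding G'_def by (simp add: nth_append m_def n_def algebra_simps)
    thus ?thesis by (simp add: qpoch_int_nat N_def D_def)
  qed
  have Gr: "G' m j = t ^ (mu ! j) * A j / B j" if "j < n" for j
  proof -
    have "G' m j = qpoch_int (q * t powi (int j - int n - 1)) q (- int (mu ! j)) /
        qpoch_int (q * t powi (int j - int n)) q (- int (mu ! j))"
      using that unfolding G'_def by (simp add: nth_append m_def n_def algebra_simps)
    thus ?thesis unfolding A_def B_def using row_factor[OF q0 t0] by simp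
  qed
  have Gmn: "G' m n = 1" unfolding G'_def by (simp add: nth_append m_def n_def qpoch_int_def)
  have "(\<Prod>i<Suc m. \<Prod>j<Suc n. G' i j) = (\<Prod>i<m. (\<Prod>j<n. G i j) * (N i / D i)) * (\<Prod>j<n. t ^ (mu ! j) * A j / B j)"
  proof -
    have "(\<Prod>i<m. (\<Prod>j<n. G' i j) * G' i n) = (\<Prod>i<m. (\<Prod>j<n. G i j) * (N i / D i))"
      by (intro prod.cong refl arg_cong2[where f="(*)"]) (auto simp: GG Gc)
    moreover have "(\<Prod>j<n. G' m j) = (\<Prod>j<n. t ^ (mu ! j) * A j / B j)"
      by (intro prod.cong refl) (auto simp: Gr)
    ultimately show ?thesis unfolding prod_Suc2 Gmn by simp
  qed
  also have "\<dots> = (\<Prod>i<m. \<Prod>j<n. G i j) * ((\<Prod>i<m. N i) / (\<Prod>i<m. D i)) *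
      (t ^ psize mu * (\<Prod>j<n. A j) / (\<Prod>j<n. B j))"
    by (simp add: prod.distrib prod_dividef power_sum psize_sum n_def)
  finally have P: "(\<Prod>i<Suc m. \<Prod>j<Suc n. G' i j) = \<dots>" .
  have Dnz: "(\<Prod>i<m. D i) \<noteq> 0" unfolding D_def using D_nz by (simp add: prod_zero_iff)
  have QA: "qpoch_part (t ^ length mu) q t mu = (\<Prod>j<n. A j)" by (simp add: qpoch_part_def A_def n_def)
  have QB: "qpoch_part (t ^ (length mu + 1)) q t mu = (\<Prod>j<n. B j)" by (simp add: qpoch_part_def B_def n_def)
  show ?thesis unfolding O1 O2 P QA QB using Dnz by (simp add: field_simps)
qed

end



lemma boxes_app: "boxes (lam @ [0]) = boxes lam"
  unfolding boxes_def by (auto simp: nth_append le_Suc_eq split: if_splits)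

lemma conjp_app: "1 \<le> j \<Longrightarrow> conjp (lam @ [0]) j = conjp lam j"
proof -
  assume j: "1 \<le> j"
  have "{i. i < length (lam @ [0]) \<and> j \<le> (lam @ [0]) ! i} = {i. i < length lam \<and> j \<le> lam ! i}"
    using j by (auto simp: nth_append less_Suc_eq)
  thus ?thesis by (simp add: conjp_def)
qed

lemma arm_app: "s \<in> boxes lam \<Longrightarrow> arm (lam @ [0]) s = arm lam s"
  by (auto simp: arm_def boxes_def nth_append)

lemma leg_app: "s \<in> boxes lam \<Longrightarrow> leg (lam @ [0]) s = leg lam s"
  by (auto simp: leg_def boxes_def conjp_app)

lemma cprime_app: "cprime (lam @ [0]) q t = cprime lam q t"
  unfolding cprime_def boxes_app by (intro prod.cong refl) (simp add: arm_app leg_app)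

lemma nfun_app: "nfun (lam @ [0]) = nfun lam"
  unfolding nfun_def by (simp add: nth_append atLeast0LessThan[symmetric])

lemma qpoch_part_app: "qpoch_part b q t (mu @ [0]) = qpoch_part b q t mu"
  unfolding qpoch_part_def by (simp add: nth_append prod.lessThan_Suc)

lemma psize_app: "psize (lam @ [0]) = psize lam"
  by (simp add: psize_def)

lemma bfun_app: "bfun (lam @ [0]) q t s = bfun lam q t s"
  unfolding bfun_def boxes_app by (simp add: arm_app leg_app)

lemma psi_app:
  assumes "length l = length l'"
  shows "psi (l @ [0]) (l' @ [0]) q t = psi l l' q t"
proof -
  have "{(i, j). (i, j) \<in> boxes (l' @ [0]) \<and> (l' @ [0]) ! (i - 1) < (l @ [0]) ! (i - 1) \<and>
        \<not> (\<exists>k < length (l @ [0]). (l' @ [0]) ! k < j \<and> j \<le> (l @ [0]) ! k)} =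
        {(i, j). (i, j) \<in> boxes l' \<and> l' ! (i - 1) < l ! (i - 1) \<and>
        \<not> (\<exists>k < length l. l' ! k < j \<and> j \<le> l ! k)}"
    using assms unfolding boxes_app
    by (auto simp: boxes_def nth_append less_Suc_eq)
  thus ?thesis unfolding psi_def bfun_app by simp
qed

lemma hstrip_app:
  assumes "length l = length l'"
  shows "hstrip (l @ [0]) (l' @ [0]) \<longleftrightarrow> hstrip l l'"
  using assms unfolding hstrip_def
  apply (auto simp: nth_append less_Suc_eq)
  done


lemma tabD:
  assumes "cs \<in> tableaux M lam"
  shows "length cs = Suc M" "cs ! 0 = replicate M 0" "cs ! M = lam"
    "\<And>i. i \<le> M \<Longrightarrow> length (cs ! i) = M" "\<And>i. i < M \<Longrightarrow> hstrip (cs ! Suc i) (cs ! i)"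
  using assms unfolding tableaux_def by auto

lemma hstrip_le: "hstrip l l' \<Longrightarrow> i < length l \<Longrightarrow> l' ! i \<le> l ! i"
  unfolding hstrip_def by auto

lemma hstrip_len: "hstrip l l' \<Longrightarrow> length l' = length l"
  unfolding hstrip_def by auto

lemma psize_le: "hstrip l l' \<Longrightarrow> psize l' \<le> psize l"
  using hstrip_len[of l l'] hstrip_le[of l l'] unfolding psize_sum
  by (auto intro: sum_mono)

lemma psize_eq: "hstrip l l' \<Longrightarrow> psize l' = psize l \<Longrightarrow> l' = l"
proof (rule ccontr)
  assume h: "hstrip l l'" and e: "psize l' = psize l" and ne: "l' \<noteq> l"
  have len: "length l' = length l" using hstrip_len[OF h] .
  then obtain i where i: "i < length l" "l' ! i \<noteq> l ! i" using ne nth_equalityI by metis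
  hence "l' ! i < l ! i" using hstrip_le[OF h i(1)] by simp
  hence "(\<Sum>j<length l. l' ! j) < (\<Sum>j<length l. l ! j)"
    using i hstrip_le[OF h] by (intro sum_strict_mono_ex1) auto
  thus False using e len unfolding psize_sum by simp
qed

lemma tab_zero:
  assumes cs: "cs \<in> tableaux M lam"
  shows "i \<le> M \<Longrightarrow> i \<le> k \<Longrightarrow> k < M \<Longrightarrow> (cs ! i) ! k = 0"
proof (induction i arbitrary: k)
  case 0 thus ?case using tabD(2)[OF cs] by simp
next
  case (Suc i)
  have h: "hstrip (cs ! Suc i) (cs ! i)" using tabD(5)[OF cs] Suc.prems by simp
  have l: "length (cs ! Suc i) = M" using tabD(4)[OF cs] Suc.prems by simp
  have hh: "\<And>j. j < length (cs ! Suc i) \<Longrightarrow> Suc j < length (cs ! Suc i) \<Longrightarrow> (cs ! Suc i) ! Suc j \<le> (cs ! i) ! j"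
    using h unfolding hstrip_def by blast
  have "(cs ! Suc i) ! Suc (k - 1) \<le> (cs ! i) ! (k - 1)"
    using hh[of "k - 1"] l Suc.prems by simp
  moreover have "(cs ! i) ! (k - 1) = 0" using Suc by simp
  moreover have "Suc (k - 1) = k" using Suc.prems by simp
  ultimately show ?case by simp
qed

lemma tab_bound:
  assumes cs: "cs \<in> tableaux M lam" and i: "i \<le> M" and k: "k < M"
  shows "(cs ! i) ! k \<le> lam ! k"
  using i
proof (induction i rule: inc_induct)
  case base thus ?case using tabD(3)[OF cs] by simp
next
  case (step n)
  have "(cs ! n) ! k \<le> (cs ! Suc n) ! k"
    using hstrip_le[OF tabD(5)[OF cs step(2)]] tabD(4)[OF cs, of "Suc n"] step k by simp
  thus ?case using step by simp
qed

lemma tab_finite: "finite (tableaux M lam)"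
proof -
  define B where "B = {l. set l \<subseteq> {0..psize lam} \<and> length l = M}"
  have fB: "finite B" unfolding B_def by (intro finite_lists_length_eq) auto
  have "tableaux M lam \<subseteq> {cs. set cs \<subseteq> B \<and> length cs = Suc M}"
  proof
    fix cs assume cs: "cs \<in> tableaux M lam"
    have "cs ! i \<in> B" if "i < length cs" for i
    proof -
      have i: "i \<le> M" using that tabD(1)[OF cs] by simp
      have "(cs ! i) ! k \<le> psize lam" if "k < M" for k
      proof -
        have "(cs ! i) ! k \<le> lam ! k" using tab_bound[OF cs i that] .
        also have "lam ! k \<le> psize lam"
        proof -
          have "length lam = M" using tabD(3)[OF cs] tabD(4)[OF cs, of M] by simp
          hence "lam ! k \<in> set lam" using that by simp
          thus ?thesis unfolding psize_def by (rule member_le_sum_list) simp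
        qed
        finally show ?thesis .
      qed
      thus ?thesis unfolding B_def using tabD(4)[OF cs i] by (auto simp: in_set_conv_nth)
    qed
    thus "cs \<in> {cs. set cs \<subseteq> B \<and> length cs = Suc M}" using tabD(1)[OF cs] by (auto simp: in_set_conv_nth)
  qed
  moreover have "finite {cs. set cs \<subseteq> B \<and> length cs = Suc M}" by (rule finite_lists_length_eq[OF fB])
  ultimately show ?thesis by (rule finite_subset)
qed

lemma telescope_nat: "(\<And>i. i < M \<Longrightarrow> f i \<le> f (Suc i)) \<Longrightarrow> (\<Sum>i<M. f (Suc i) - f i) = f M - (f 0 :: nat)"
proof (induction M)
  case (Suc M)
  note pr = Suc.prems
  have "f 0 \<le> f M"
  proof -
    have "\<forall>j\<le>M. f 0 \<le> f j"
    proof (intro allI impI)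
      fix j assume "j \<le> M" thus "f 0 \<le> f j"
      proof (induction j)
        case (Suc j)
        hence "f 0 \<le> f j" by simp
        moreover have "f j \<le> f (Suc j)" using pr Suc(2) by simp
        ultimately show ?case by simp
      qed simp
    qed
    thus ?thesis by simp
  qed
  thus ?case using Suc by simp
qed simp

lemma macP_scale: "macP mu q t (map (\<lambda>v. t * v) ys) = t ^ psize mu * macP mu q t ys"
  unfolding macP_def length_map sum_distrib_left
proof (rule sum.cong[OF refl])
  fix cs assume cs: "cs \<in> tableaux (length ys) mu"
  define M where "M = length ys"
  define d where "d = (\<lambda>i. psize (cs ! Suc i) - psize (cs ! i))"
  have sd: "(\<Sum>i<M. d i) = psize mu"
  proof -
    have "(\<Sum>i<M. d i) = psize (cs ! M) - psize (cs ! 0)"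
      unfolding d_def using tabD(5)[OF cs[folded M_def]] psize_le by (intro telescope_nat) auto
    thus ?thesis using tabD(2,3)[OF cs[folded M_def]] by (simp add: psize_def sum_list_replicate)
  qed
  have "(\<Prod>i<M. psi (cs ! Suc i) (cs ! i) q t * (map (\<lambda>v. t * v) ys ! i) ^ d i) =
        (\<Prod>i<M. t ^ d i * (psi (cs ! Suc i) (cs ! i) q t * (ys ! i) ^ d i))"
    by (intro prod.cong refl) (simp add: M_def power_mult_distrib)
  also have "\<dots> = t ^ psize mu * (\<Prod>i<M. psi (cs ! Suc i) (cs ! i) q t * (ys ! i) ^ d i)"
    unfolding prod.distrib power_sum[symmetric] sd ..
  finally show "(\<Prod>i<length ys. psi (cs ! Suc i) (cs ! i) q t * map ((*) t) ys ! i ^ (psize (cs ! Suc i) - psize (cs ! i))) =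
    t ^ psize mu * (\<Prod>i<length ys. psi (cs ! Suc i) (cs ! i) q t * ys ! i ^ (psize (cs ! Suc i) - psize (cs ! i)))"
    unfolding d_def M_def by simp
qed


lemma psi_refl: "psi l l q t = 1"
  unfolding psi_def by simp

lemma last_factor_zero:
  assumes cs: "cs \<in> tableaux (Suc m) L" and ne: "cs ! m \<noteq> L" and xs: "length xs = m"
  shows "(\<Prod>i<Suc m. psi (cs ! Suc i) (cs ! i) q t * (xs @ [0]) ! i ^ (psize (cs ! Suc i) - psize (cs ! i))) = 0"
proof -
  have h: "hstrip L (cs ! m)" using tabD(5)[OF cs, of m] tabD(3)[OF cs] by simp
  have "psize (cs ! m) \<noteq> psize L" using psize_eq[OF h] ne by auto
  hence "psize (cs ! m) < psize L" using psize_le[OF h] by simp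
  hence "(xs @ [0]) ! m ^ (psize (cs ! Suc m) - psize (cs ! m)) = (0::complex)"
    using xs tabD(3)[OF cs] by (simp add: nth_append)
  thus ?thesis by (simp add: prod.lessThan_Suc)
qed

lemma macP_last_nz:
  assumes xs: "length xs = m" and nz: "lam ! m \<noteq> 0"
  shows "macP lam q t (xs @ [0]) = 0"
  unfolding macP_def
proof (rule sum.neutral, rule ballI)
  fix cs assume cs0: "cs \<in> tableaux (length (xs @ [0])) lam"
  hence cs: "cs \<in> tableaux (Suc m) lam" using xs by simp
  have "(cs ! m) ! m = 0" using tab_zero[OF cs, of m m] by simp
  hence "cs ! m \<noteq> lam" using nz by auto
  thus "(\<Prod>i<length (xs @ [0]). psi (cs ! Suc i) (cs ! i) q t * (xs @ [0]) ! i ^ (psize (cs ! Suc i) - psize (cs ! i))) = 0"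
    using last_factor_zero[OF cs _ xs] xs by simp
qed

lemma butlast_rep: "butlast (replicate (Suc m) x) = replicate m x"
proof -
  have "replicate (Suc m) x = replicate m x @ [x]" by (simp add: replicate_append_same)
  thus ?thesis by simp
qed

lemma butlast_snoc0: "length l = Suc m \<Longrightarrow> l ! m = 0 \<Longrightarrow> l = butlast l @ [0]"
  by (metis append_butlast_last_id diff_Suc_1 last_conv_nth length_0_conv nat.distinct(1))

lemma macP_last:
  assumes xs: "length xs = m" and l0: "length lam0 = m" and ip: "is_part (Suc m) (lam0 @ [0])"
  shows "macP (lam0 @ [0]) q t (xs @ [0]) = macP lam0 q t xs"
proof -
  define L where "L = lam0 @ [0]"
  define T' where "T' = tableaux (Suc m) L"
  define T where "T = tableaux m lam0"
  define g where "g = (\<lambda>ds. map (\<lambda>l. l @ [0]) ds @ [L])"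
  define F' where "F' = (\<lambda>cs. \<Prod>i<Suc m. psi (cs ! Suc i) (cs ! i) q t * (xs @ [0]) ! i ^ (psize (cs ! Suc i) - psize (cs ! i)))"
  define F where "F = (\<lambda>cs. \<Prod>i<m. psi (cs ! Suc i) (cs ! i) q t * xs ! i ^ (psize (cs ! Suc i) - psize (cs ! i)))"
  have gi: "g ds ! i = ds ! i @ [0]" if "ds \<in> T" "i \<le> m" for ds i
    using that tabD(1)[of ds m lam0] unfolding g_def T_def by (simp add: nth_append)
  have gl: "g ds ! Suc m = L" "length (g ds) = Suc (Suc m)" if "ds \<in> T" for ds
    using that tabD(1)[of ds m lam0] unfolding g_def T_def by (simp_all add: nth_append)
  have gT: "g ds \<in> T'" if ds: "ds \<in> T" for ds
  proof -
    have ds': "ds \<in> tableaux m lam0" using ds T_def by simp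
    have "g ds ! 0 = replicate (Suc m) 0" using gi[OF ds, of 0] tabD(2)[OF ds'] by (simp add: replicate_append_same)
    moreover have "\<forall>i\<le>Suc m. length (g ds ! i) = Suc m"
    proof (intro allI impI)
      fix i assume "i \<le> Suc m"
      thus "length (g ds ! i) = Suc m"
        using gi[OF ds, of i] gl[OF ds] tabD(4)[OF ds'] l0 by (cases "i = Suc m") (auto simp: L_def)
    qed
    moreover have "\<forall>i<Suc m. hstrip (g ds ! Suc i) (g ds ! i)"
    proof (intro allI impI)
      fix i assume i: "i < Suc m"
      show "hstrip (g ds ! Suc i) (g ds ! i)"
      proof (cases "i = m")
        case True
        have "g ds ! i = L" using gi[OF ds, of m] tabD(3)[OF ds'] True by (simp add: L_def)
        moreover have "hstrip L L" using ip unfolding hstrip_def is_part_def L_def by auto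
        ultimately show ?thesis using gl[OF ds] True by simp
      next
        case False
        hence "i < m" using i by simp
        thus ?thesis using gi[OF ds, of i] gi[OF ds, of "Suc i"] tabD(4,5)[OF ds'] hstrip_app by simp
      qed
    qed
    ultimately show ?thesis using gl[OF ds] unfolding T'_def tableaux_def by auto
  qed
  have inj: "inj_on g T"
  proof (rule inj_onI)
    fix a b assume "a \<in> T" "b \<in> T" "g a = g b"
    hence "map (\<lambda>l. l @ [0]) a = map (\<lambda>l. l @ [0]) b" unfolding g_def by simp
    moreover have "inj (\<lambda>l::nat list. l @ [0])" by (rule injI) simp
    ultimately show "a = b" by (metis list.inj_map_strong injD)
  qed
  have Fg: "F' (g ds) = F ds" if ds: "ds \<in> T" for ds
  proof -
    have ds': "ds \<in> tableaux m lam0" using ds T_def by simp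
    have "g ds ! m = L" using gi[OF ds, of m] tabD(3)[OF ds'] by (simp add: L_def)
    hence last: "psi (g ds ! Suc m) (g ds ! m) q t * (xs @ [0]) ! m ^ (psize (g ds ! Suc m) - psize (g ds ! m)) = 1"
      using gl[OF ds] by (simp add: psi_refl)
    have "(\<Prod>i<m. psi (g ds ! Suc i) (g ds ! i) q t * (xs @ [0]) ! i ^ (psize (g ds ! Suc i) - psize (g ds ! i))) = F ds"
      unfolding F_def
    proof (rule prod.cong[OF refl])
      fix i assume "i \<in> {..<m}"
      hence i: "i < m" by simp
      have "length (ds ! Suc i) = length (ds ! i)" using tabD(4)[OF ds'] i by simp
      thus "psi (g ds ! Suc i) (g ds ! i) q t * (xs @ [0]) ! i ^ (psize (g ds ! Suc i) - psize (g ds ! i)) =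
            psi (ds ! Suc i) (ds ! i) q t * xs ! i ^ (psize (ds ! Suc i) - psize (ds ! i))"
        using gi[OF ds, of i] gi[OF ds, of "Suc i"] i xs by (simp add: psi_app psize_app nth_append)
    qed
    thus ?thesis unfolding F'_def using last by (simp add: prod.lessThan_Suc)
  qed
  have zero: "F' cs = 0" if cs: "cs \<in> T' - g ` T" for cs
  proof (cases "cs ! m = L")
    case False
    thus ?thesis using last_factor_zero[of cs m L xs q t] cs xs unfolding F'_def T'_def by simp
  next
    case True
    have cs': "cs \<in> tableaux (Suc m) L" using cs T'_def by simp
    have snoc: "cs ! i = butlast (cs ! i) @ [0]" if "i \<le> m" for i
      using butlast_snoc0[of "cs ! i" m] tabD(4)[OF cs', of i] tab_zero[OF cs', of i m] that by simp
    define ds where "ds = map butlast (take (Suc m) cs)"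
    have lcs: "length cs = Suc (Suc m)" using tabD(1)[OF cs'] .
    have dsi: "ds ! i = butlast (cs ! i)" if "i \<le> m" for i using that lcs by (simp add: ds_def)
    have lds: "length ds = Suc m" using lcs by (simp add: ds_def)
    have dsT: "ds \<in> T"
    proof -
      have "ds ! 0 = replicate m 0" using dsi[of 0] tabD(2)[OF cs'] by (simp only: butlast_rep)
      moreover have "ds ! m = lam0" using dsi[of m] True by (simp add: L_def)
      moreover have "\<forall>i\<le>m. length (ds ! i) = m" using dsi tabD(4)[OF cs'] by simp
      moreover have "\<forall>i<m. hstrip (ds ! Suc i) (ds ! i)"
      proof (intro allI impI)
        fix i assume i: "i < m"
        have "hstrip (cs ! Suc i) (cs ! i)" using tabD(5)[OF cs'] i by simp
        hence "hstrip (butlast (cs ! Suc i) @ [0]) (butlast (cs ! i) @ [0])"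
          using snoc[of i] snoc[of "Suc i"] i by simp
        moreover have "length (butlast (cs ! Suc i)) = length (butlast (cs ! i))"
          using tabD(4)[OF cs'] i by simp
        ultimately show "hstrip (ds ! Suc i) (ds ! i)" using hstrip_app dsi i by simp
      qed
      ultimately show ?thesis using lds unfolding T_def tableaux_def by auto
    qed
    have "g ds = cs"
    proof (rule nth_equalityI)
      show "length (g ds) = length cs" using gl[OF dsT] lcs by simp
      fix i assume "i < length (g ds)"
      hence i: "i < Suc (Suc m)" using gl[OF dsT] by simp
      show "g ds ! i = cs ! i"
      proof (cases "i = Suc m")
        case True thus ?thesis using gl[OF dsT] tabD(3)[OF cs'] by simp
      next
        case False
        hence "i \<le> m" using i by simp
        thus ?thesis using gi[OF dsT] dsi snoc by simp
      qed
    qed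
    hence "cs \<in> g ` T" using dsT by blast
    thus ?thesis using cs by simp
  qed
  have "macP L q t (xs @ [0]) = sum F' T'"
    unfolding macP_def F'_def T'_def using xs by simp
  also have "\<dots> = sum F' (g ` T)"
    using zero gT tab_finite[of "Suc m" L] by (intro sum.mono_neutral_right) (auto simp: T'_def)
  also have "\<dots> = sum (F' \<circ> g) T" by (rule sum.reindex[OF inj])
  also have "\<dots> = sum F T" using Fg by (intro sum.cong) auto
  also have "\<dots> = macP lam0 q t xs" unfolding macP_def F_def T_def using xs by simp
  finally show ?thesis unfolding L_def .
qed



lemma qpoch_inf_0: "qpoch_inf 0 q = 1"
  unfolding qpoch_inf_def qpoch_def by (simp add: limI)

lemma PI_app: "(lam, mu) \<in> Phi_index m n \<Longrightarrow> (lam @ [0], mu @ [0]) \<in> Phi_index (Suc m) (Suc n)"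
  unfolding Phi_index_def is_part_def by (auto simp: nth_append less_Suc_eq)

lemma PI_good: "(lam, mu) \<in> Phi_index m n \<Longrightarrow> m \<le> n \<Longrightarrow> goodp lam mu"
  unfolding Phi_index_def goodp_def is_part_def by auto

lemma PI_butlast:
  assumes "(lam, mu) \<in> Phi_index (Suc m) (Suc n)" and mn: "m \<le> n"
  shows "(butlast lam, butlast mu) \<in> Phi_index m n"
proof -
  have "butlast mu ! (i + n - m) \<le> butlast lam ! i" if "i < m" for i
  proof -
    have "i + n - m < n" using that mn by simp
    thus ?thesis using assms that unfolding Phi_index_def is_part_def by (auto simp: nth_butlast)
  qed
  thus ?thesis using assms unfolding Phi_index_def is_part_def by (auto simp: nth_butlast)
qed

lemma PI_len: "(lam, mu) \<in> Phi_index m n \<Longrightarrow> length lam = m \<and> length mu = n"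
  unfolding Phi_index_def is_part_def by auto


lemma prod_cons_nth: "(\<Prod>k<length (c # a). f ((c # a) ! k)) = f c * (\<Prod>k<length a. f (a ! k))"
  by (simp add: prod.lessThan_Suc_shift del: prod.lessThan_Suc)

theorem lemma5p5:
  fixes ty :: vtype and a b :: "complex list" and q t :: complex
    and xs ys :: "complex list"
  assumes mn: "length xs \<le> length ys"
    and r: "length a = length b + 1"
    and q0: "q \<noteq> 0" and t0: "t \<noteq> 0" and q1: "norm q < 1"
    and generic: "\<forall>i j :: int. q powi i * t powi j = 1 \<longrightarrow> i = 0 \<and> j = 0"
    and bwd: "\<forall>c \<in> set b. \<forall>k i :: nat. c * q ^ k * t powi (- int i) \<noteq> 1"
    and convL: "Phi_term ty a b q t (xs @ [0]) (ys @ [0]) summable_on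
                  Phi_index (length xs + 1) (length ys + 1)"
    and convR: "Phi_term ty (t ^ length ys # a) (t ^ (length ys + 1) # b) q t xs (map (\<lambda>v. t * v) ys)
                  summable_on Phi_index (length xs) (length ys)"
  shows "Phi ty a b q t (xs @ [0]) (ys @ [0]) =
         Phi ty (t ^ length ys # a) (t ^ (length ys + 1) # b) q t xs (map (\<lambda>v. t * v) ys)"
proof -
  define m where "m = length xs"
  define n where "n = length ys"
  have mn': "m \<le> n" using mn by (simp add: m_def n_def)
  define fL where "fL = Phi_term ty a b q t (xs @ [0]) (ys @ [0])"
  define fR where "fR = Phi_term ty (t ^ length ys # a) (t ^ (length ys + 1) # b) q t xs (map (\<lambda>v. t * v) ys)"
  define h where "h = (\<lambda>p :: nat list \<times> nat list. (fst p @ [0], snd p @ [0]))"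
  have teq: "fL (h p) = fR p" if p: "p \<in> Phi_index m n" for p
  proof -
    obtain lam mu where pe: "p = (lam, mu)" by (cases p)
    have pp: "(lam, mu) \<in> Phi_index m n" using p pe by simp
    have g: "goodp lam mu" using PI_good[OF pp mn'] .
    have ll: "length lam = m" "length mu = n" using PI_len[OF pp] by auto
    have pp': "(lam @ [0], mu @ [0]) \<in> Phi_index (Suc m) (Suc n)" using PI_app[OF pp] .
    have ip1: "is_part (Suc m) (lam @ [0])" and ip2: "is_part (Suc n) (mu @ [0])"
      using pp' unfolding Phi_index_def by auto
    have M1: "macP (lam @ [0]) q t (xs @ [0]) = macP lam q t xs"
      using macP_last[OF m_def[symmetric] ll(1) ip1] .
    have M2: "macP (mu @ [0]) q t (ys @ [0]) = macP mu q t ys"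
      using macP_last[OF n_def[symmetric] ll(2) ip2] .
    have O: "Omega ty (lam @ [0]) (mu @ [0]) q t =
      t ^ psize mu * qpoch_part (t ^ n) q t mu / qpoch_part (t ^ (n + 1)) q t mu * Omega ty lam mu q t"
      using Omega_stab[OF q0 t0 generic g] ll by simp
    define X where "X = t ^ (nfun lam + nfun mu) * macP lam q t xs"
    define C where "C = cprime lam q t * cprime mu q t"
    define PA where "PA = (\<Prod>k<length a. qpoch_part (a ! k) q t mu)"
    define PB where "PB = (\<Prod>k<length b. qpoch_part (b ! k) q t mu)"
    have L: "fL (h p) = X * macP mu q t ys / C * PA / PB *
       (t ^ psize mu * qpoch_part (t ^ n) q t mu / qpoch_part (t ^ (n + 1)) q t mu * Omega ty lam mu q t)"
      unfolding fL_def h_def pe Phi_term_def X_def C_def PA_def PB_def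
      by (simp add: M1 M2 O nfun_app cprime_app qpoch_part_app)
    have PA': "(\<Prod>k<length (t ^ length ys # a). qpoch_part ((t ^ length ys # a) ! k) q t mu) = qpoch_part (t ^ n) q t mu * PA"
      unfolding PA_def n_def by (rule prod_cons_nth)
    have PB': "(\<Prod>k<length (t ^ (length ys + 1) # b). qpoch_part ((t ^ (length ys + 1) # b) ! k) q t mu) = qpoch_part (t ^ (n + 1)) q t mu * PB"
      unfolding PB_def n_def by (rule prod_cons_nth)
    have R: "fR p = X * (t ^ psize mu * macP mu q t ys) / C * (qpoch_part (t ^ n) q t mu * PA) /
       (qpoch_part (t ^ (n + 1)) q t mu * PB) * Omega ty lam mu q t"
      unfolding fR_def pe Phi_term_def case_prod_conv PA' PB'
      by (simp add: macP_scale n_def X_def C_def)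
    show ?thesis unfolding L R by (simp add: divide_inverse mult_ac)
  qed
  have sub: "h ` Phi_index m n \<subseteq> Phi_index (Suc m) (Suc n)" using PI_app by (auto simp: h_def)
  have zero: "fL p = 0" if p: "p \<in> Phi_index (Suc m) (Suc n) - h ` Phi_index m n" for p
  proof -
    obtain lam mu where pe: "p = (lam, mu)" by (cases p)
    have pp: "(lam, mu) \<in> Phi_index (Suc m) (Suc n)" using p pe by simp
    have ll: "length lam = Suc m" "length mu = Suc n" using PI_len[OF pp] by auto
    show ?thesis
    proof (cases "lam ! m = 0 \<and> mu ! n = 0")
      case True
      have "lam = butlast lam @ [0]" using butlast_snoc0[OF ll(1)] True by simp
      moreover have "mu = butlast mu @ [0]" using butlast_snoc0[OF ll(2)] True by simp
      ultimately have "p = h (butlast lam, butlast mu)" unfolding pe h_def by simp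
      moreover have "(butlast lam, butlast mu) \<in> Phi_index m n" using PI_butlast[OF pp mn'] .
      ultimately have "p \<in> h ` Phi_index m n" by (rule image_eqI)
      thus ?thesis using p by simp
    next
      case False
      hence "macP lam q t (xs @ [0]) = 0 \<or> macP mu q t (ys @ [0]) = 0"
        using macP_last_nz[OF m_def[symmetric]] macP_last_nz[OF n_def[symmetric]] by blast
      thus ?thesis unfolding fL_def pe Phi_term_def by auto
    qed
  qed
  have inj: "inj_on h (Phi_index m n)" by (auto simp: inj_on_def h_def)
  have S: "infsum fL (Phi_index (Suc m) (Suc n)) = infsum fR (Phi_index m n)"
  proof -
    have "infsum fL (Phi_index (Suc m) (Suc n)) = infsum fL (h ` Phi_index m n)"
      by (rule infsum_cong_neutral) (use zero sub in auto)
    also have "\<dots> = infsum (fL \<circ> h) (Phi_index m n)" by (rule infsum_reindex[OF inj])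
    also have "\<dots> = infsum fR (Phi_index m n)" by (rule infsum_cong) (simp add: teq)
    finally show ?thesis .
  qed
  have P: "(\<Prod>i<length (xs @ [0]). qpoch_inf ((xs @ [0]) ! i) q /
       qpoch_inf ((xs @ [0]) ! i * t powi (int (length (xs @ [0])) - int (length (ys @ [0])) - 1)) q) =
    (\<Prod>i<length xs. qpoch_inf (xs ! i) q /
       qpoch_inf (xs ! i * t powi (int (length xs) - int (length (map (\<lambda>v. t * v) ys)) - 1)) q)"
  proof -
    have e: "int (length (xs @ [0])) - int (length (ys @ [0])) - 1 = int (length xs) - int (length (map (\<lambda>v. t * v) ys)) - 1"
      by simp
    have "(\<Prod>i<length (xs @ [0]). qpoch_inf ((xs @ [0]) ! i) q /
       qpoch_inf ((xs @ [0]) ! i * t powi (int (length xs) - int (length (map (\<lambda>v. t * v) ys)) - 1)) q) =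
      (\<Prod>i<length xs. qpoch_inf ((xs @ [0]) ! i) q /
       qpoch_inf ((xs @ [0]) ! i * t powi (int (length xs) - int (length (map (\<lambda>v. t * v) ys)) - 1)) q) *
      (qpoch_inf 0 q / qpoch_inf 0 q)"
      by (simp only: length_append_singleton prod.lessThan_Suc nth_append_length mult_zero_left)
    also have "\<dots> = (\<Prod>i<length xs. qpoch_inf (xs ! i) q /
       qpoch_inf (xs ! i * t powi (int (length xs) - int (length (map (\<lambda>v. t * v) ys)) - 1)) q)"
      by (simp add: qpoch_inf_0 nth_append)
    finally show ?thesis unfolding e .
  qed
  have S': "infsum (Phi_term ty a b q t (xs @ [0]) (ys @ [0])) (Phi_index (length (xs @ [0])) (length (ys @ [0]))) =
    infsum (Phi_term ty (t ^ length ys # a) (t ^ (length ys + 1) # b) q t xs (map (\<lambda>v. t * v) ys))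
      (Phi_index (length xs) (length (map (\<lambda>v. t * v) ys)))"
    using S unfolding fL_def fR_def m_def n_def by simp
  show ?thesis
    unfolding Phi_def Let_def P S' ..
qed

end
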